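(* Let $V$ be a finite set of points in $\mathbb{R}^m$ such that the Euclidean distance $d(x,y)=\|x-y\|_2$ restricted to $V$ is an ultrametric, and let $T$ be a generating tree for $V$. Then every pair $\{i,j\}\subseteq V$ obtains revenue $rev(i,j)=1$ in $T$; in particular $rev_T(V)=\binom{|V|}{2}$ and $T$ maximizes the Hierarchical-Revenue objective over all hierarchical clustering trees on $V$.
   Context: A metric is an ultrametric if $d(x,y)\le\max\{d(x,z),d(y,z)\}$ for all $x,y,z$. A generating tree for $V$ is a rooted binary tree $T$ with $|V|$ leaves in bijection with $V$ and $|V|-1$ internal nodes (set $\mathcal N$), with a weight function $W:\mathcal N\to\mathbb{R}_{\ge0}$ such that (i) whenever $N_1$ lies on the path from $N_2$ to the root, $W(N_1)\ge W(N_2)$, and (ii) $d(x,y)=W(\mathrm{LCA}_T(x,y))$ for all distinct $x,y\in V$. A hierarchical clustering tree on $V$ is a rooted binary tree whose leaves are in bijection with $V$; each node is identified with the set of points at the leaves of its subtree, and an internal node with set $S$ whose children have sets $S_1,S_2$ gives the split $S\to(S_1,S_2)$. $\rho(S)=\frac1{|S|}\sum_{u\in S}u$. For a split $S\to(S_1,S_2)$ and $i\in S_1,j\in S_2$, $rev(i,j)=\min\{d(i,j)/\max\{d(i,\rho(S_1)),d(j,\rho(S_2))\},1\}$ (equal to $1$ if the maximum is $0$); for a pair $\{i,j\}$ this is evaluated at the split where $i,j$ are first separated, and $rev_T(V)=\sum_{\{i,j\}\subseteq V}rev(i,j)$. *)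

theory Defs
  imports "HOL-Analysis.Analysis"
begin

text \<open>Points live in an arbitrary Euclidean space 'a (i.e. R^m for some m);
  dist is the Euclidean distance.\<close>

definition ultrametric_on :: "'a::metric_space set \<Rightarrow> bool" where
  "ultrametric_on V \<longleftrightarrow>
     (\<forall>x\<in>V. \<forall>y\<in>V. \<forall>z\<in>V. dist x y \<le> max (dist x z) (dist y z))"

datatype 'a htree = Leaf 'a | Node "'a htree" "'a htree"

fun leaves :: "'a htree \<Rightarrow> 'a list" where
  "leaves (Leaf x) = [x]"
| "leaves (Node l r) = leaves l @ leaves r"

definition hc_tree :: "'a set \<Rightarrow> 'a htree \<Rightarrow> bool" where
  "hc_tree V T \<longleftrightarrow> distinct (leaves T) \<and> set (leaves T) = V"

datatype 'a wtree = WLeaf 'a | WNode real "'a wtree" "'a wtree"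

fun forget :: "'a wtree \<Rightarrow> 'a htree" where
  "forget (WLeaf x) = Leaf x"
| "forget (WNode w l r) = Node (forget l) (forget r)"

text \<open>Weight of an internal node; for a leaf child we return 0, which is harmless
  since the monotonicity condition only concerns internal nodes and weights are \<ge> 0.\<close>
fun wt :: "'a wtree \<Rightarrow> real" where
  "wt (WLeaf x) = 0"
| "wt (WNode w l r) = w"

text \<open>Weights nonnegative, monotone towards the root (stated for parent/child pairs,
  hence along all root paths by transitivity), and d(x,y) equals the weight of the
  LCA of x and y: the LCA of x in the left subtree and y in the right subtree of a node
  is exactly that node.\<close>
fun gen_ok :: "'a::metric_space wtree \<Rightarrow> bool" where
  "gen_ok (WLeaf x) = True"
| "gen_ok (WNode w l r) \<longleftrightarrow> w \<ge> 0 \<and> wt l \<le> w \<and> wt r \<le> w \<and> gen_ok l \<and> gen_ok r \<and>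
      (\<forall>x\<in>set (leaves (forget l)). \<forall>y\<in>set (leaves (forget r)). dist x y = w)"

definition generating_tree :: "'a::metric_space set \<Rightarrow> 'a wtree \<Rightarrow> bool" where
  "generating_tree V T \<longleftrightarrow> hc_tree V (forget T) \<and> gen_ok T"

definition centroid :: "'a::real_vector set \<Rightarrow> 'a" where
  "centroid S = (1 / real (card S)) *\<^sub>R (\<Sum>u\<in>S. u)"

definition rev_split :: "'a::euclidean_space set \<Rightarrow> 'a set \<Rightarrow> 'a \<Rightarrow> 'a \<Rightarrow> real" where
  "rev_split S1 S2 i j =
     (let M = max (dist i (centroid S1)) (dist j (centroid S2))
      in if M = 0 then 1 else min (dist i j / M) 1)"

fun pair_rev :: "'a::euclidean_space htree \<Rightarrow> 'a set \<Rightarrow> real" where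
  "pair_rev (Leaf x) p = 0"
| "pair_rev (Node l r) p =
     (if p \<subseteq> set (leaves l) then pair_rev l p
      else if p \<subseteq> set (leaves r) then pair_rev r p
      else rev_split (set (leaves l)) (set (leaves r))
             (THE i. i \<in> p \<inter> set (leaves l)) (THE j. j \<in> p \<inter> set (leaves r)))"

definition revenue :: "'a::euclidean_space htree \<Rightarrow> real" where
  "revenue T = (\<Sum>p\<in>{p. p \<subseteq> set (leaves T) \<and> card p = 2}. pair_rev T p)"

end

theory Submission
  imports Defs
begin

lemma gen_ok_dist:
  "gen_ok T \<Longrightarrow> x \<in> set (leaves (forget T)) \<Longrightarrow> y \<in> set (leaves (forget T)) \<Longrightarrow> dist x y \<le> wt T"
proof (induction T arbitrary: x y)
  case (WLeaf z) then show ?case by simp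
next
  case (WNode w l r)
  from WNode.prems have g: "w \<ge> 0" "wt l \<le> w" "wt r \<le> w" "gen_ok l" "gen_ok r"
    "\<forall>x\<in>set (leaves (forget l)). \<forall>y\<in>set (leaves (forget r)). dist x y = w" by auto
  from WNode.prems(2,3) show ?case
    using WNode.IH(1)[OF g(4)] WNode.IH(2)[OF g(5)] g(1,2,3) g(6)
    by (auto simp: dist_commute) (smt (verit) dist_commute)+
qed

lemma centroid_dist:
  fixes S :: "'a::euclidean_space set"
  assumes "finite S" "S \<noteq> {}" "\<forall>u\<in>S. dist i u \<le> w"
  shows "dist i (centroid S) \<le> w"
proof -
  have n: "real (card S) > 0" using assms by (simp add: card_gt_0_iff)
  have "i - centroid S = (1 / real (card S)) *\<^sub>R (\<Sum>u\<in>S. i - u)"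
    using n by (simp add: centroid_def sum_subtractf scaleR_diff_right sum_constant_scaleR)
  hence "dist i (centroid S) = (1 / real (card S)) * norm (\<Sum>u\<in>S. i - u)"
    using n by (simp add: dist_norm)
  also have "\<dots> \<le> (1 / real (card S)) * (\<Sum>u\<in>S. norm (i - u))"
    using n by (intro mult_left_mono norm_sum) auto
  also have "\<dots> \<le> (1 / real (card S)) * (\<Sum>u\<in>S. w)"
    using n assms(3) by (intro mult_left_mono sum_mono) (auto simp: dist_norm)
  also have "\<dots> = w" using n by simp
  finally show ?thesis .
qed

lemma rev_one:
  "gen_ok T \<Longrightarrow> distinct (leaves (forget T)) \<Longrightarrow> i \<in> set (leaves (forget T)) \<Longrightarrow>
   j \<in> set (leaves (forget T)) \<Longrightarrow> i \<noteq> j \<Longrightarrow> pair_rev (forget T) {i, j} = 1"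
proof (induction T arbitrary: i j)
  case (WLeaf z) then show ?case by simp
next
  case (WNode w l r)
  let ?L = "set (leaves (forget l))" and ?R = "set (leaves (forget r))"
  from WNode.prems have g: "w \<ge> 0" "wt l \<le> w" "wt r \<le> w" "gen_ok l" "gen_ok r"
    "\<forall>x\<in>?L. \<forall>y\<in>?R. dist x y = w" by auto
  from WNode.prems(2) have dl: "distinct (leaves (forget l))" and dr: "distinct (leaves (forget r))"
    and disj: "?L \<inter> ?R = {}" by auto
  show ?case
  proof (cases "{i,j} \<subseteq> ?L")
    case True then show ?thesis using WNode.IH(1)[OF g(4) dl] WNode.prems by simp
  next
    case nL: False
    show ?thesis
    proof (cases "{i,j} \<subseteq> ?R")
      case True then show ?thesis using WNode.IH(2)[OF g(5) dr] WNode.prems disj by auto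
    next
      case nR: False
      obtain a b where ab: "a \<in> ?L" "b \<in> ?R" "{i,j} \<inter> ?L = {a}" "{i,j} \<inter> ?R = {b}"
        using nL nR WNode.prems(3,4) disj by auto
      have ta: "(THE x. x \<in> {i,j} \<inter> ?L) = a" using ab(3) by auto
      have tb: "(THE x. x \<in> {i,j} \<inter> ?R) = b" using ab(4) by auto
      have dab: "dist a b = w" using g(6) ab by auto
      have ca: "dist a (centroid ?L) \<le> w"
        using gen_ok_dist[OF g(4) ab(1)] g(2) ab(1) by (intro centroid_dist) force+
      have cb: "dist b (centroid ?R) \<le> w"
        using gen_ok_dist[OF g(5) ab(2)] g(3) ab(2) by (intro centroid_dist) force+
      have "rev_split ?L ?R a b = 1"
      proof -
        let ?M = "max (dist a (centroid ?L)) (dist b (centroid ?R))"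
        have "?M \<le> w" using ca cb by simp
        moreover have "?M \<ge> 0" by (simp add: le_max_iff_disj)
        ultimately show ?thesis unfolding rev_split_def Let_def using dab
          by (cases "?M = 0") (auto simp: min_def field_simps)
      qed
      then show ?thesis using nL nR ta tb by (simp only: forget.simps pair_rev.simps if_False)
    qed
  qed
qed

lemma rev_le_one: "pair_rev T p \<le> 1"
  by (induction T p rule: pair_rev.induct) (auto simp: rev_split_def Let_def)

theorem mainTheorem10:
  fixes V :: "'a::euclidean_space set" and T :: "'a wtree"
  assumes "finite V"
    and "ultrametric_on V"
    and "generating_tree V T"
  shows "(\<forall>i\<in>V. \<forall>j\<in>V. i \<noteq> j \<longrightarrow> pair_rev (forget T) {i, j} = 1)
       \<and> revenue (forget T) = real (card V choose 2)
       \<and> (\<forall>T'. hc_tree V T' \<longrightarrow> revenue T' \<le> revenue (forget T))"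
proof -
  from assms(3) have g: "gen_ok T" "distinct (leaves (forget T))" "set (leaves (forget T)) = V"
    by (auto simp: generating_tree_def hc_tree_def)
  have A: "\<forall>i\<in>V. \<forall>j\<in>V. i \<noteq> j \<longrightarrow> pair_rev (forget T) {i, j} = 1"
    using rev_one[OF g(1,2)] g(3) by auto
  let ?P = "{p. p \<subseteq> V \<and> card p = 2}"
  have cP: "card ?P = card V choose 2" using n_subsets[OF assms(1)] by simp
  have B: "revenue (forget T) = real (card V choose 2)"
  proof -
    have "revenue (forget T) = (\<Sum>p\<in>?P. 1)"
      unfolding revenue_def g(3)
    proof (rule sum.cong)
      fix p assume "p \<in> ?P"
      then obtain i j where "p = {i,j}" "i \<noteq> j" "i \<in> V" "j \<in> V"
        by (auto simp: card_2_iff)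
      then show "pair_rev (forget T) p = 1" using A by auto
    qed simp
    then show ?thesis using cP by simp
  qed
  have C: "\<forall>T'. hc_tree V T' \<longrightarrow> revenue T' \<le> revenue (forget T)"
  proof (intro allI impI)
    fix T' assume "hc_tree V T'"
    hence s: "set (leaves T') = V" by (simp add: hc_tree_def)
    have "revenue T' \<le> (\<Sum>p\<in>?P. 1)"
      unfolding revenue_def s by (rule sum_mono) (rule rev_le_one)
    then show "revenue T' \<le> revenue (forget T)" using B cP by simp
  qed
  show ?thesis using A B C by blast
qed

end
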